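(* Consider the Data Collection process with parameter $\beta$ on a connected weighted graph $G=(V,E,w)$ with sink $u_s$ and relative rate vector $\bm{J}$, and suppose the chain $\{Q^\beta_t\}$ is ergodic with stationary distribution $\pi$ under which $\mathbb{E}_\pi[Q(u)]<\infty$ for every $u\ne u_s$. Let $\bm{\eta}\in\mathbb{R}^V$ be the vector of steady-state queue occupancy probabilities ($\bm{\eta}_u=\pi(Q(u)>0)$ for $u\ne u_s$, $\bm{\eta}_{u_s}=0$). Then $\bm{\eta}^T(I-\mathcal{P})=\beta\bm{J}^T$; equivalently, the vector $\bm{x}$ with $\bm{x}_u=\bm{\eta}_u/d_u$ satisfies $\bm{x}^TL=\beta\bm{J}^T$.
   Context: Graph notation: for $u\in V$, the generalized degree is $d_u=\sum_{v:(u,v)\in E}w_{uv}$; $A$ is the weighted adjacency matrix ($A_{uv}=w_{uv}$ if $(u,v)\in E$, else $0$), $D=\mathrm{diag}(d_u)$, $L=D-A$, and $\mathcal{P}=D^{-1}A$ is the transition matrix of the natural random walk, $\mathcal{P}(u,v)=w_{uv}/d_u$. Data Collection process: fix a sink $u_s\in V$ and a set of sources $V_s\subseteq V\setminus\{u_s\}$. The relative rate vector $\bm{J}\in\mathbb{R}^{V}$ satisfies $\bm{J}_v>0$ for $v\in V_s$, $\bm{J}_v=0$ for $v\in V\setminus(V_s\cup\{u_s\})$, and $\bm{J}_{u_s}=-\sum_{v\ne u_s}\bm{J}_v$. Given $\beta>0$ with $\beta\bm{J}_v\le1$ for all $v\in V_s$, the Data Collection process with parameter $\beta$ is the discrete-time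 Markov chain $\{Q^\beta_t\}_{t\ge0}$ on $(\mathbb{N}\cup\{0\})^{V\setminus\{u_s\}}$, where $Q^\beta_t(v)$ is the number of packets in the queue of node $v$ at time $t$, evolving as follows at each step: each $v\in V_s$ independently generates a new packet with probability $\beta\bm{J}_v$ (Bernoulli) and places it in its queue; each node $u\ne u_s$ with nonempty queue picks one packet from its queue and independently picks a neighbor $v$ with probability $w_{uv}/d_u$, and transmits the packet to $v$: the packet is removed from $u$'s queue and added to $v$'s queue if $v\ne u_s$, or removed from the system if $v=u_s$. The sink has no queue. *)

theory Defs
  imports "HOL-Probability.Probability"
begin

definition gdeg :: "('v::finite \<Rightarrow> 'v \<Rightarrow> real) \<Rightarrow> 'v \<Rightarrow> real" where
  "gdeg w u = (\<Sum>v\<in>UNIV. w u v)"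

definition edges :: "('v \<Rightarrow> 'v \<Rightarrow> real) \<Rightarrow> ('v \<times> 'v) set" where
  "edges w = {(u,v). w u v > 0}"

definition weighted_graph :: "('v \<Rightarrow> 'v \<Rightarrow> real) \<Rightarrow> bool" where
  "weighted_graph w \<longleftrightarrow> (\<forall>u v. w u v = w v u) \<and> (\<forall>u v. w u v \<ge> 0)"

definition connected_graph :: "('v \<Rightarrow> 'v \<Rightarrow> real) \<Rightarrow> bool" where
  "connected_graph w \<longleftrightarrow> (\<forall>u v. (u,v) \<in> (edges w)\<^sup>*)"

definition trans_mat :: "('v::finite \<Rightarrow> 'v \<Rightarrow> real) \<Rightarrow> 'v \<Rightarrow> 'v \<Rightarrow> real" where
  "trans_mat w u v = w u v / gdeg w u"

definition laplacian :: "('v::finite \<Rightarrow> 'v \<Rightarrow> real) \<Rightarrow> 'v \<Rightarrow> 'v \<Rightarrow> real" where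
  "laplacian w u v = (if u = v then gdeg w u else 0) - w u v"

definition nbr_pmf :: "('v::finite \<Rightarrow> 'v \<Rightarrow> real) \<Rightarrow> 'v \<Rightarrow> 'v pmf" where
  "nbr_pmf w u = embed_pmf (\<lambda>v. w u v / gdeg w u)"

definition rate_vector :: "'v::finite \<Rightarrow> 'v set \<Rightarrow> ('v \<Rightarrow> real) \<Rightarrow> bool" where
  "rate_vector us Vs J \<longleftrightarrow> us \<notin> Vs \<and> (\<forall>v\<in>Vs. J v > 0)
     \<and> (\<forall>v. v \<notin> Vs \<and> v \<noteq> us \<longrightarrow> J v = 0)
     \<and> J us = - (\<Sum>v\<in>UNIV - {us}. J v)"

(* States: queue lengths Q :: 'v \<Rightarrow> nat; the sink coordinate is always 0 (no queue). *)
definition dc_states :: "'v \<Rightarrow> ('v \<Rightarrow> nat) set" where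
  "dc_states us = {Q. Q us = 0}"

(* One step: decisions to transmit are made on the current state Q_t; the newly generated
   packets A and the received packets are added to obtain Q_{t+1}. *)
definition dc_next :: "'v::finite \<Rightarrow> ('v \<Rightarrow> nat) \<Rightarrow> ('v \<Rightarrow> bool) \<Rightarrow> ('v \<Rightarrow> 'v) \<Rightarrow> 'v \<Rightarrow> nat" where
  "dc_next us Q A D v =
     (if v = us then 0
      else Q v - (if Q v > 0 then 1 else 0) + (if A v then 1 else 0)
           + card {u. u \<noteq> us \<and> Q u > 0 \<and> D u = v})"

definition dc_step :: "('v::finite \<Rightarrow> 'v \<Rightarrow> real) \<Rightarrow> 'v \<Rightarrow> 'v set \<Rightarrow> ('v \<Rightarrow> real) \<Rightarrow> real
                      \<Rightarrow> ('v \<Rightarrow> nat) \<Rightarrow> ('v \<Rightarrow> nat) pmf" where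
  "dc_step w us Vs J \<beta> Q =
     do {
       A \<leftarrow> Pi_pmf UNIV False (\<lambda>v. if v \<in> Vs then bernoulli_pmf (\<beta> * J v) else return_pmf False);
       D \<leftarrow> Pi_pmf UNIV us (\<lambda>u. nbr_pmf w u);
       return_pmf (dc_next us Q A D)
     }"

definition dc_dist :: "('v::finite \<Rightarrow> 'v \<Rightarrow> real) \<Rightarrow> 'v \<Rightarrow> 'v set \<Rightarrow> ('v \<Rightarrow> real) \<Rightarrow> real
                      \<Rightarrow> nat \<Rightarrow> ('v \<Rightarrow> nat) \<Rightarrow> ('v \<Rightarrow> nat) pmf" where
  "dc_dist w us Vs J \<beta> t s = ((\<lambda>p. bind_pmf p (dc_step w us Vs J \<beta>)) ^^ t) (return_pmf s)"

definition stationary :: "(('v \<Rightarrow> nat) \<Rightarrow> ('v \<Rightarrow> nat) pmf) \<Rightarrow> ('v \<Rightarrow> nat) pmf \<Rightarrow> bool" where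
  "stationary K \<pi> \<longleftrightarrow> bind_pmf \<pi> K = \<pi>"

definition dc_ergodic :: "('v::finite \<Rightarrow> 'v \<Rightarrow> real) \<Rightarrow> 'v \<Rightarrow> 'v set \<Rightarrow> ('v \<Rightarrow> real) \<Rightarrow> real
                      \<Rightarrow> ('v \<Rightarrow> nat) pmf \<Rightarrow> bool" where
  "dc_ergodic w us Vs J \<beta> \<pi> \<longleftrightarrow>
     stationary (dc_step w us Vs J \<beta>) \<pi> \<and> set_pmf \<pi> \<subseteq> dc_states us \<and>
     (\<forall>s\<in>dc_states us. \<forall>x. (\<lambda>t. pmf (dc_dist w us Vs J \<beta> t s) x) \<longlonglongrightarrow> pmf \<pi> x)"

definition occupancy :: "'v \<Rightarrow> ('v \<Rightarrow> nat) pmf \<Rightarrow> 'v \<Rightarrow> real" where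
  "occupancy us \<pi> u = (if u = us then 0 else measure_pmf.prob \<pi> {Q. Q u > 0})"

end

theory Submission
  imports Defs
begin

lemma pmf_nbr:
  fixes w :: "'v::finite \<Rightarrow> 'v \<Rightarrow> real"
  assumes nn: "\<And>u v. w u v \<ge> 0" and pos: "gdeg w u > 0"
  shows "pmf (nbr_pmf w u) v = w u v / gdeg w u"
proof -
  have "(\<integral>\<^sup>+x. ennreal (w u x / gdeg w u) \<partial>count_space UNIV) = 1"
  proof -
    have "(\<integral>\<^sup>+x. ennreal (w u x / gdeg w u) \<partial>count_space UNIV) = (\<Sum>x\<in>UNIV. ennreal (w u x / gdeg w u))"
      by (simp add: nn_integral_count_space_finite)
    also have "\<dots> = ennreal (\<Sum>x\<in>UNIV. w u x / gdeg w u)"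
      using nn pos by (intro sum_ennreal) auto
    also have "(\<Sum>x\<in>UNIV. w u x / gdeg w u) = 1"
      using pos by (simp add: sum_divide_distrib[symmetric] gdeg_def)
    finally show ?thesis by simp
  qed
  then show ?thesis unfolding nbr_pmf_def
    by (subst pmf_embed_pmf) (use nn pos in auto)
qed

lemma step_expect:
  fixes w :: "'v::finite \<Rightarrow> 'v \<Rightarrow> real"
  assumes nn: "\<And>u v. w u v \<ge> 0" and pos: "\<And>u. gdeg w u > 0" and vus: "v \<noteq> us"
    and bern: "\<And>v. v \<in> Vs \<Longrightarrow> 0 \<le> \<beta> * J v \<and> \<beta> * J v \<le> 1"
  shows "measure_pmf.expectation (dc_step w us Vs J \<beta> Q) (\<lambda>Q'. real (Q' v)) =
     real (Q v) - (if Q v > 0 then 1 else 0) + (if v \<in> Vs then \<beta> * J v else 0)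
     + (\<Sum>u\<in>{u. u \<noteq> us \<and> Q u > 0}. w u v / gdeg w u)"
proof -
  define PA where "PA = Pi_pmf UNIV False (\<lambda>v. if v \<in> Vs then bernoulli_pmf (\<beta> * J v) else return_pmf False)"
  define PD where "PD = Pi_pmf UNIV us (\<lambda>u. nbr_pmf w u)"
  define S where "S = {u. u \<noteq> us \<and> Q u > 0}"
  have step: "dc_step w us Vs J \<beta> Q = map_pmf (\<lambda>x. dc_next us Q (fst x) (snd x)) (pair_pmf PA PD)"
    by (simp add: dc_step_def pair_pmf_def map_bind_pmf PA_def PD_def)
  have fin: "finite (set_pmf (pair_pmf PA PD))" by simp
  have eq: "real (dc_next us Q (fst x) (snd x) v) =
      (real (Q v) - (if Q v > 0 then 1 else 0)) + (if fst x v then 1 else 0)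
      + (\<Sum>u\<in>S. indicator {v} (snd x u))" for x
  proof -
    have "{u. u \<noteq> us \<and> Q u > 0 \<and> snd x u = v} = {u\<in>S. snd x u = v}" by (auto simp: S_def)
    moreover have "real (card {u\<in>S. snd x u = v}) = (\<Sum>u\<in>{u\<in>S. snd x u = v}. 1)"
      by (rule real_of_card)
    moreover have "(\<Sum>u\<in>{u\<in>S. snd x u = v}. 1::real) = (\<Sum>u\<in>S. if snd x u = v then 1 else 0)"
      by (rule sum.inter_filter) simp
    moreover have "(\<Sum>u\<in>S. if snd x u = v then 1 else 0::real) = (\<Sum>u\<in>S. indicator {v} (snd x u))"
      by (rule sum.cong) (auto simp: indicator_def)
    ultimately have C: "real (card {u. u \<noteq> us \<and> Q u > 0 \<and> snd x u = v}) = (\<Sum>u\<in>S. indicator {v} (snd x u))"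
      by simp
    have "real (dc_next us Q (fst x) (snd x) v) = real (Q v - (if Q v > 0 then 1 else 0)) + (if fst x v then 1 else 0)
           + real (card {u. u \<noteq> us \<and> Q u > 0 \<and> snd x u = v})"
      using vus unfolding dc_next_def by simp
    also have "real (Q v - (if Q v > 0 then 1 else 0)) = real (Q v) - (if Q v > 0 then 1 else 0)"
      by (cases "Q v > 0") (auto simp: of_nat_diff)
    finally show ?thesis unfolding C .
  qed
  have iA: "measure_pmf.expectation (pair_pmf PA PD) (\<lambda>x. if fst x v then 1 else 0 :: real) = (if v \<in> Vs then \<beta> * J v else 0)"
  proof -
    have "measure_pmf.expectation (pair_pmf PA PD) (\<lambda>x. if fst x v then 1 else 0 :: real)
        = measure_pmf.expectation (map_pmf (\<lambda>A. A v) (map_pmf fst (pair_pmf PA PD))) (\<lambda>b. if b then 1 else 0 :: real)"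
      by simp
    also have "map_pmf (\<lambda>A. A v) (map_pmf fst (pair_pmf PA PD)) = (if v \<in> Vs then bernoulli_pmf (\<beta> * J v) else return_pmf False)"
      unfolding map_fst_pair_pmf PA_def by (subst Pi_pmf_component) auto
    finally show ?thesis using bern[of v]
      by (auto simp: integral_measure_pmf_real[where A="UNIV"] UNIV_bool)
  qed
  have iD: "measure_pmf.expectation (pair_pmf PA PD) (\<lambda>x. indicator {v} (snd x u) :: real) = w u v / gdeg w u" for u
  proof -
    have "measure_pmf.expectation (pair_pmf PA PD) (\<lambda>x. indicator {v} (snd x u) :: real)
        = measure_pmf.expectation (map_pmf (\<lambda>D. D u) (map_pmf snd (pair_pmf PA PD))) (indicator {v})"
      by (simp only: integral_map_pmf)
    also have "map_pmf (\<lambda>D. D u) (map_pmf snd (pair_pmf PA PD)) = nbr_pmf w u"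
      unfolding map_snd_pair_pmf PD_def by (subst Pi_pmf_component) auto
    finally show ?thesis
      by (simp add: measure_pmf_single pmf_nbr nn pos)
  qed
  have "measure_pmf.expectation (dc_step w us Vs J \<beta> Q) (\<lambda>Q'. real (Q' v)) =
     measure_pmf.expectation (pair_pmf PA PD) (\<lambda>x. (real (Q v) - (if Q v > 0 then 1 else 0)) + (if fst x v then 1 else 0)
      + (\<Sum>u\<in>S. indicator {v} (snd x u)))"
    by (simp only: step integral_map_pmf eq)
  also have "\<dots> = (real (Q v) - (if Q v > 0 then 1 else 0)) + measure_pmf.expectation (pair_pmf PA PD) (\<lambda>x. if fst x v then 1 else 0 :: real)
      + (\<Sum>u\<in>S. measure_pmf.expectation (pair_pmf PA PD) (\<lambda>x. indicator {v} (snd x u) :: real))"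
    using fin by (simp add: integrable_measure_pmf_finite integral_add integral_sum)
  finally show ?thesis unfolding iA iD S_def by simp
qed

lemma step_expect2:
  fixes w :: "'v::finite \<Rightarrow> 'v \<Rightarrow> real"
  assumes nn: "\<And>u v. w u v \<ge> 0" and pos: "\<And>u. gdeg w u > 0" and vus: "v \<noteq> us"
    and bern: "\<And>v. v \<in> Vs \<Longrightarrow> 0 \<le> \<beta> * J v \<and> \<beta> * J v \<le> 1"
  shows "measure_pmf.expectation (dc_step w us Vs J \<beta> Q) (\<lambda>Q'. real (Q' v)) =
     real (Q v) - indicator {Q. Q v > 0} Q + (if v \<in> Vs then \<beta> * J v else 0)
     + (\<Sum>u\<in>UNIV - {us}. indicator {Q. Q u > 0} Q * (w u v / gdeg w u))"
proof -
  have "(\<Sum>u\<in>{u. u \<noteq> us \<and> Q u > 0}. w u v / gdeg w u) = (\<Sum>u\<in>{u\<in>UNIV - {us}. Q u > 0}. w u v / gdeg w u)"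
    by (rule sum.cong) auto
  also have "\<dots> = (\<Sum>u\<in>UNIV - {us}. if Q u > 0 then w u v / gdeg w u else 0)"
    by (rule sum.inter_filter) simp
  also have "\<dots> = (\<Sum>u\<in>UNIV - {us}. indicator {Q. Q u > 0} Q * (w u v / gdeg w u))"
    by (rule sum.cong) (auto simp: indicator_def)
  finally show ?thesis using step_expect[OF nn pos vus bern, where Q=Q] by (simp add: indicator_def)
qed

lemma finite_step: "finite (set_pmf (dc_step w us Vs J \<beta> Q))"
  by (simp add: dc_step_def)

lemma balance:
  fixes w :: "'v::finite \<Rightarrow> 'v \<Rightarrow> real"
  assumes nn: "\<And>u v. w u v \<ge> 0" and pos: "\<And>u. gdeg w u > 0" and vus: "v \<noteq> us"
    and bern: "\<And>v. v \<in> Vs \<Longrightarrow> 0 \<le> \<beta> * J v \<and> \<beta> * J v \<le> 1"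
    and stat: "bind_pmf \<pi> (dc_step w us Vs J \<beta>) = \<pi>"
    and int: "integrable (measure_pmf \<pi>) (\<lambda>Q. real (Q v))"
  shows "measure_pmf.prob \<pi> {Q. Q v > 0} = (if v \<in> Vs then \<beta> * J v else 0)
     + (\<Sum>u\<in>UNIV - {us}. measure_pmf.prob \<pi> {Q. Q u > 0} * (w u v / gdeg w u))"
proof -
  define g where "g Q = real (Q v) - indicator {Q. Q v > 0} Q + (if v \<in> Vs then \<beta> * J v else 0)
     + (\<Sum>u\<in>UNIV - {us}. indicator {Q. Q u > 0} Q * (w u v / gdeg w u))" for Q :: "'v \<Rightarrow> nat"
  have gE: "measure_pmf.expectation (dc_step w us Vs J \<beta> Q) (\<lambda>Q'. real (Q' v)) = g Q" for Q
    unfolding g_def by (rule step_expect2[OF nn pos vus bern])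
  have ind_int: "integrable (measure_pmf \<pi>) (\<lambda>Q. indicator {Q. Q u > 0} Q :: real)" for u
    by (rule measure_pmf.integrable_const_bound[where B=1]) (auto simp: indicator_def)
  have i1: "integrable (measure_pmf \<pi>) (\<lambda>Q. real (Q v) - indicator {Q. Q v > 0} Q)"
    by (rule Bochner_Integration.integrable_diff[OF int ind_int])
  have i2: "integrable (measure_pmf \<pi>) (\<lambda>Q. \<Sum>u\<in>UNIV - {us}. indicator {Q. Q u > 0} Q * (w u v / gdeg w u))"
    by (rule Bochner_Integration.integrable_sum, rule integrable_mult_left, rule ind_int)
  have i3: "integrable (measure_pmf \<pi>) (\<lambda>Q. if v \<in> Vs then \<beta> * J v else 0)"
    by (rule measure_pmf.integrable_const)
  have gint: "integrable (measure_pmf \<pi>) g"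
    unfolding g_def by (rule Bochner_Integration.integrable_add[OF Bochner_Integration.integrable_add[OF i1 i3] i2])
  have gnn: "g Q \<ge> 0" for Q
  proof -
    have "0 \<le> measure_pmf.expectation (dc_step w us Vs J \<beta> Q) (\<lambda>Q'. real (Q' v))"
      by (rule integral_nonneg_AE) simp
    then show ?thesis using gE by simp
  qed
  have "ennreal (measure_pmf.expectation \<pi> (\<lambda>Q. real (Q v))) = (\<integral>\<^sup>+Q. ennreal (real (Q v)) \<partial>\<pi>)"
    by (rule nn_integral_eq_integral[symmetric]) (use int in auto)
  also have "\<dots> = (\<integral>\<^sup>+Q. ennreal (real (Q v)) \<partial>(bind_pmf \<pi> (dc_step w us Vs J \<beta>)))"
    by (simp only: stat)
  also have "\<dots> = (\<integral>\<^sup>+Q. \<integral>\<^sup>+Q'. ennreal (real (Q' v)) \<partial>(dc_step w us Vs J \<beta> Q) \<partial>\<pi>)"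
    by (rule nn_integral_bind_pmf)
  also have "\<dots> = (\<integral>\<^sup>+Q. ennreal (g Q) \<partial>\<pi>)"
  proof (rule nn_integral_cong)
    fix Q
    show "(\<integral>\<^sup>+Q'. ennreal (real (Q' v)) \<partial>(dc_step w us Vs J \<beta> Q)) = ennreal (g Q)"
      unfolding gE[symmetric]
      by (rule nn_integral_eq_integral) (auto intro: integrable_measure_pmf_finite finite_step)
  qed
  also have "\<dots> = ennreal (measure_pmf.expectation \<pi> g)"
    by (rule nn_integral_eq_integral) (use gint gnn in auto)
  finally have "measure_pmf.expectation \<pi> (\<lambda>Q. real (Q v)) = measure_pmf.expectation \<pi> g"
    by (rule ennreal_inj[THEN iffD1, rotated 2]) (auto intro!: integral_nonneg_AE gnn)
  also have "measure_pmf.expectation \<pi> g = measure_pmf.expectation \<pi> (\<lambda>Q. real (Q v)) - measure_pmf.prob \<pi> {Q. Q v > 0}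
     + (if v \<in> Vs then \<beta> * J v else 0)
     + (\<Sum>u\<in>UNIV - {us}. measure_pmf.prob \<pi> {Q. Q u > 0} * (w u v / gdeg w u))"
    unfolding g_def using int ind_int
    by (simp add: integral_add integral_diff integral_sum integrable_sum integral_mult_left)
  finally show ?thesis by simp
qed


lemma gdeg_pos:
  fixes w :: "'v::finite \<Rightarrow> 'v \<Rightarrow> real"
  assumes nn: "\<And>u v. w u v \<ge> 0" and conn: "connected_graph w" and ne: "x \<noteq> (y::'v)"
  shows "gdeg w u > 0"
proof -
  obtain z where "z \<noteq> u" using ne by metis
  then have "(u, z) \<in> (edges w)\<^sup>*" "u \<noteq> z" using conn unfolding connected_graph_def by auto
  then obtain t where "(u, t) \<in> edges w" by (metis converse_rtranclE)
  then have "w u t > 0" by (simp add: edges_def)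
  then show ?thesis unfolding gdeg_def using nn by (intro sum_pos2[where i=t]) auto
qed

theorem mainTheorem2:
  fixes w :: "'v::finite \<Rightarrow> 'v \<Rightarrow> real" and us :: 'v and Vs :: "'v set"
    and J :: "'v \<Rightarrow> real" and \<beta> :: real and \<pi> :: "('v \<Rightarrow> nat) pmf"
  assumes "weighted_graph w" and "connected_graph w"
    and "rate_vector us Vs J"
    and "\<beta> > 0" and "\<forall>v\<in>Vs. \<beta> * J v \<le> 1"
    and "dc_ergodic w us Vs J \<beta> \<pi>"
    and "\<forall>u. u \<noteq> us \<longrightarrow> integrable (measure_pmf \<pi>) (\<lambda>Q. real (Q u))"
  shows "(\<forall>v. (\<Sum>u\<in>UNIV. occupancy us \<pi> u * ((if u = v then 1 else 0) - trans_mat w u v)) = \<beta> * J v)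
       \<and> (\<forall>v. (\<Sum>u\<in>UNIV. (occupancy us \<pi> u / gdeg w u) * laplacian w u v) = \<beta> * J v)"
proof -
  note wg = assms(1) and conn = assms(2) and rv = assms(3) and bpos = assms(4) and ble = assms(5)
    and erg = assms(6) and int = assms(7)
  have nn: "\<And>u v. w u v \<ge> 0" using wg by (simp add: weighted_graph_def)
  have usVs: "us \<notin> Vs" and Jpos: "\<And>v. v \<in> Vs \<Longrightarrow> J v > 0"
    and J0: "\<And>v. v \<notin> Vs \<Longrightarrow> v \<noteq> us \<Longrightarrow> J v = 0"
    and Jus: "J us = - (\<Sum>v\<in>UNIV - {us}. J v)" using rv by (auto simp: rate_vector_def)
  define \<eta> where "\<eta> = occupancy us \<pi>"
  define P where "P = trans_mat w"
  have eta_us: "\<eta> us = 0" by (simp add: \<eta>_def occupancy_def)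
  have part1: "\<forall>v. (\<Sum>u\<in>UNIV. \<eta> u * ((if u = v then 1 else 0) - P u v)) = \<beta> * J v"
  proof (cases "\<forall>u::'v. u = us")
    case True
    then have "\<eta> u = 0" for u using eta_us by metis
    moreover have "J v = 0" for v
    proof -
      have "UNIV - {us} = {}" using True by auto
      moreover have "v = us" using True by metis
      ultimately show ?thesis using Jus by (metis add.inverse_neutral sum.empty)
    qed
    ultimately show ?thesis by simp
  next
    case False
    then obtain x where x: "x \<noteq> us" by auto
    have pos: "\<And>u. gdeg w u > 0" using gdeg_pos[OF nn conn x] by blast
    have bern: "\<And>v. v \<in> Vs \<Longrightarrow> 0 \<le> \<beta> * J v \<and> \<beta> * J v \<le> 1"
      using bpos Jpos ble by (auto intro: less_imp_le)
    have stat: "bind_pmf \<pi> (dc_step w us Vs J \<beta>) = \<pi>"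
      using erg by (simp add: dc_ergodic_def stationary_def)
    have rows: "(\<Sum>v\<in>UNIV. P u v) = 1" for u
      using pos[of u] by (simp add: P_def trans_mat_def sum_divide_distrib[symmetric] gdeg_def[symmetric])
    have sumeta: "(\<Sum>u\<in>UNIV. \<eta> u * f u) = (\<Sum>u\<in>UNIV - {us}. measure_pmf.prob \<pi> {Q. Q u > 0} * f u)" for f
    proof -
      have "(\<Sum>u\<in>UNIV. \<eta> u * f u) = \<eta> us * f us + (\<Sum>u\<in>UNIV - {us}. \<eta> u * f u)"
        by (rule sum.remove) auto
      also have "\<dots> = (\<Sum>u\<in>UNIV - {us}. measure_pmf.prob \<pi> {Q. Q u > 0} * f u)"
        using eta_us by (auto intro!: sum.cong simp: \<eta>_def occupancy_def)
      finally show ?thesis .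
    qed
    have gen: "(\<Sum>u\<in>UNIV. \<eta> u * ((if u = v then 1 else 0) - P u v)) = \<eta> v - (\<Sum>u\<in>UNIV. \<eta> u * P u v)" for v
    proof -
      have "(\<Sum>u\<in>UNIV. \<eta> u * ((if u = v then 1 else 0) - P u v)) = (\<Sum>u\<in>UNIV. (if u = v then \<eta> u else 0)) - (\<Sum>u\<in>UNIV. \<eta> u * P u v)"
      proof -
        have "(\<Sum>u\<in>UNIV. \<eta> u * ((if u = v then 1 else 0) - P u v)) = (\<Sum>u\<in>UNIV. (if u = v then \<eta> u else 0) - \<eta> u * P u v)"
          by (rule sum.cong) (auto simp: right_diff_distrib)
        then show ?thesis by (simp only: sum_subtractf)
      qed
      then show ?thesis by simp
    qed
    have nonsink: "\<eta> v - (\<Sum>u\<in>UNIV. \<eta> u * P u v) = \<beta> * J v" if v: "v \<noteq> us" for v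
    proof -
      have "\<eta> v = measure_pmf.prob \<pi> {Q. Q v > 0}" using v by (simp add: \<eta>_def occupancy_def)
      also have "\<dots> = (if v \<in> Vs then \<beta> * J v else 0)
          + (\<Sum>u\<in>UNIV - {us}. measure_pmf.prob \<pi> {Q. Q u > 0} * (w u v / gdeg w u))"
        by (rule balance[OF nn pos v bern stat]) (use int v in auto)
      also have "(if v \<in> Vs then \<beta> * J v else 0) = \<beta> * J v" using J0 v by auto
      also have "(\<Sum>u\<in>UNIV - {us}. measure_pmf.prob \<pi> {Q. Q u > 0} * (w u v / gdeg w u)) = (\<Sum>u\<in>UNIV. \<eta> u * P u v)"
        using sumeta[of "\<lambda>u. P u v"] by (simp add: P_def trans_mat_def)
      finally show ?thesis by simp
    qed
    have sink: "\<eta> us - (\<Sum>u\<in>UNIV. \<eta> u * P u us) = \<beta> * J us"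
    proof -
      have "\<beta> * (\<Sum>v\<in>UNIV - {us}. J v) = (\<Sum>v\<in>UNIV - {us}. \<eta> v - (\<Sum>u\<in>UNIV. \<eta> u * P u v))"
        by (simp add: sum_distrib_left nonsink)
      also have "\<dots> = (\<Sum>v\<in>UNIV - {us}. \<eta> v) - (\<Sum>u\<in>UNIV. \<eta> u * (\<Sum>v\<in>UNIV - {us}. P u v))"
        by (simp add: sum_subtractf sum_distrib_left sum.swap[of _ "UNIV - {us}"])
      finally have A: "\<beta> * (\<Sum>v\<in>UNIV - {us}. J v) = (\<Sum>v\<in>UNIV - {us}. \<eta> v) - (\<Sum>u\<in>UNIV. \<eta> u * (\<Sum>v\<in>UNIV - {us}. P u v))" .
      have B: "(\<Sum>v\<in>UNIV - {us}. \<eta> v) = (\<Sum>v\<in>UNIV. \<eta> v)"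
        using sum.remove[of UNIV us \<eta>] eta_us by simp
      have C: "(\<Sum>v\<in>UNIV - {us}. P u v) = 1 - P u us" for u
        using sum.remove[of UNIV us "P u"] rows[of u] by simp
      have "\<beta> * (\<Sum>v\<in>UNIV - {us}. J v) = (\<Sum>v\<in>UNIV. \<eta> v) - (\<Sum>u\<in>UNIV. \<eta> u * (1 - P u us))"
        using A unfolding B C .
      then have "\<beta> * (\<Sum>v\<in>UNIV - {us}. J v) = (\<Sum>u\<in>UNIV. \<eta> u * P u us)"
        by (simp add: right_diff_distrib sum_subtractf)
      then show ?thesis using eta_us Jus by simp
    qed
    show ?thesis
    proof
      fix v show "(\<Sum>u\<in>UNIV. \<eta> u * ((if u = v then 1 else 0) - P u v)) = \<beta> * J v"
        using gen[of v] nonsink[of v] sink by (cases "v = us") auto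
    qed
  qed
  have ok: "\<eta> u = 0 \<or> gdeg w u > 0" for u
  proof (cases "\<forall>u::'v. u = us")
    case True then show ?thesis using eta_us by metis
  next
    case False
    then obtain x where x: "x \<noteq> us" by auto
    show ?thesis using gdeg_pos[OF nn conn x] by blast
  qed
  have pw: "(\<eta> u / gdeg w u) * laplacian w u v = \<eta> u * ((if u = v then 1 else 0) - P u v)" for u v
    using ok[of u] by (auto simp: laplacian_def P_def trans_mat_def field_simps)
  show ?thesis using part1 unfolding \<eta>_def[symmetric] P_def[symmetric] pw by simp
qed

end
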